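(* Let $k$ be an algebraically closed field and $\alpha,\beta,\gamma$ partitions. (1) For $f,g\in V_{\alpha,\gamma}^\beta(k)$, the relation $(N_\alpha,N_\beta,f)\leq_{\rm deg}(N_\alpha,N_\beta,g)$ holds if and only if $G_g(k)$ is contained in the closure of $G_f(k)$ in $M_\alpha^\beta(k)$. (2) If $\Gamma$ is an LR-tableau of type $(\alpha,\beta,\gamma)$ and $f,g\in V_\Gamma(k)$, then $(N_\alpha,N_\beta,f)\leq_{\rm deg}(N_\alpha,N_\beta,g)$ (degeneration within $V_\Gamma(k)$) holds if and only if $G_g(k)$ is contained in the closure of $G_f(k)$ in $M_\alpha^\beta(k)$.
   Context: For a partition $\alpha$ let $N_\alpha=\bigoplus_ik[T]/(T^{\alpha_i})$. $H_\alpha^\beta(k)=\operatorname{Hom}_k(N_\alpha,N_\beta)$ is an affine space with Zariski topology; $M_\alpha^\beta(k)\subseteq H_\alpha^\beta(k)$ is the closed subset of $k[T]$-homomorphisms; $V_{\alpha,\gamma}^\beta(k)$ is the subset of injective $k[T]$-homomorphisms $f$ with $\operatorname{Coker}f\cong N_\gamma$. The group $\operatorname{Aut}_{k[T]}(N_\alpha)\times\operatorname{Aut}_{k[T]}(N_\beta)$ acts by $(a,h)\cdot f=hfa^{-1}$; $G_f(k)$ is the orbit of $f$. $(N_\alpha,N_\beta,f)\leq_{\rm deg}(N_\alpha,N_\beta,g)$ means $G_g(k)$ lies in the closure of $G_f(k)$ in $V_{\alpha,\gamma}^\beta(k)$ (induced topology). For an LR-tableau $\Gamma$ of type $(\alpha,\beta,\gamma)$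 (a skew Young tableau of shape $\beta\setminus\gamma$ with content determined by $\alpha$ satisfying the Littlewood–Richardson conditions), $V_\Gamma(k)\subseteq V_{\alpha,\gamma}^\beta(k)$ is the set of $f$ whose associated LR-tableau (the tableau recording, for each $i$, the shape of the module $N_\beta/T^i f(N_\alpha)$) is $\Gamma$; it is a union of orbits, and degeneration within $V_\Gamma(k)$ means containment in the closure within $V_\Gamma(k)$. *)

theory Defs
  imports "HOL-Analysis.Analysis" "HOL-Computational_Algebra.Polynomial"
begin

definition is_partition :: "nat list \<Rightarrow> bool" where
  "is_partition l \<longleftrightarrow> sorted_wrt (\<ge>) l \<and> 0 \<notin> set l"

definition part :: "nat list \<Rightarrow> nat \<Rightarrow> nat" where
  "part l r = (if r < length l then l ! r else 0)"

text \<open>Basis of N_lambda = direct sum of k[T]/(T^lambda_i): the element (i,j) stands for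
  T^j e_i, with j < lambda_i.\<close>
definition bas :: "nat list \<Rightarrow> (nat \<times> nat) set" where
  "bas l = {(i, j). i < length l \<and> j < l ! i}"

text \<open>Elements of N_lambda as coordinate vectors over the basis.\<close>
definition Nmod :: "nat list \<Rightarrow> (nat \<times> nat \<Rightarrow> 'k::field) set" where
  "Nmod l = {v. \<forall>x. x \<notin> bas l \<longrightarrow> v x = 0}"

text \<open>Action of T on N_lambda: T (T^j e_i) = T^(j+1) e_i, which is 0 if j+1 = lambda_i.\<close>
definition Tact :: "nat list \<Rightarrow> (nat \<times> nat \<Rightarrow> 'k::field) \<Rightarrow> (nat \<times> nat \<Rightarrow> 'k)" where
  "Tact l v = (\<lambda>(i, j). if (i, j) \<in> bas l \<and> 0 < j then v (i, j - 1) else 0)"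

definition aff :: "'c set \<Rightarrow> ('c \<Rightarrow> 'k::field) set" where
  "aff I = {m. \<forall>c. c \<notin> I \<longrightarrow> m c = 0}"

inductive_set poly_fun :: "'c set \<Rightarrow> (('c \<Rightarrow> 'k::field) \<Rightarrow> 'k) set" for I where
  const: "(\<lambda>m. a) \<in> poly_fun I"
| coord: "c \<in> I \<Longrightarrow> (\<lambda>m. m c) \<in> poly_fun I"
| add: "p \<in> poly_fun I \<Longrightarrow> q \<in> poly_fun I \<Longrightarrow> (\<lambda>m. p m + q m) \<in> poly_fun I"
| mult: "p \<in> poly_fun I \<Longrightarrow> q \<in> poly_fun I \<Longrightarrow> (\<lambda>m. p m * q m) \<in> poly_fun I"

definition zariski_closed :: "'c set \<Rightarrow> ('c \<Rightarrow> 'k::field) set \<Rightarrow> bool" where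
  "zariski_closed I Z \<longleftrightarrow> (\<exists>P. P \<subseteq> poly_fun I \<and> Z = {m \<in> aff I. \<forall>p\<in>P. p m = 0})"

definition zariski :: "'c set \<Rightarrow> ('c \<Rightarrow> 'k::field) topology" where
  "zariski I = topology (\<lambda>U. U \<subseteq> aff I \<and> zariski_closed I (aff I - U))"

text \<open>Coordinates of H_alpha^beta: a k-linear map N_alpha \<rightarrow> N_beta is its matrix
  m((y,x)) for y in the basis of N_beta and x in the basis of N_alpha.\<close>
definition Hidx :: "nat list \<Rightarrow> nat list \<Rightarrow> ((nat \<times> nat) \<times> (nat \<times> nat)) set" where
  "Hidx a b = bas b \<times> bas a"

definition Hspace :: "nat list \<Rightarrow> nat list \<Rightarrow> ((nat \<times> nat) \<times> (nat \<times> nat) \<Rightarrow> 'k::field) set" where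
  "Hspace a b = aff (Hidx a b)"

definition mapply :: "nat list \<Rightarrow> ((nat \<times> nat) \<times> (nat \<times> nat) \<Rightarrow> 'k::field)
    \<Rightarrow> (nat \<times> nat \<Rightarrow> 'k) \<Rightarrow> (nat \<times> nat \<Rightarrow> 'k)" where
  "mapply a m v = (\<lambda>y. \<Sum>x\<in>bas a. m (y, x) * v x)"

definition mcomp :: "nat list \<Rightarrow> ((nat \<times> nat) \<times> (nat \<times> nat) \<Rightarrow> 'k::field)
    \<Rightarrow> ((nat \<times> nat) \<times> (nat \<times> nat) \<Rightarrow> 'k) \<Rightarrow> ((nat \<times> nat) \<times> (nat \<times> nat) \<Rightarrow> 'k)" where
  "mcomp b m1 m2 = (\<lambda>(y, x). \<Sum>z\<in>bas b. m1 (y, z) * m2 (z, x))"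

definition Mspace :: "nat list \<Rightarrow> nat list \<Rightarrow> ((nat \<times> nat) \<times> (nat \<times> nat) \<Rightarrow> 'k::field) set" where
  "Mspace a b = {m \<in> Hspace a b.
     \<forall>v\<in>Nmod a. mapply a m (Tact a v) = Tact b (mapply a m v)}"

text \<open>N_b / U is isomorphic to N_c (U a submodule): there is a surjective
  k[T]-homomorphism N_b \<rightarrow> N_c with kernel U.\<close>
definition quot_iso :: "nat list \<Rightarrow> (nat \<times> nat \<Rightarrow> 'k::field) set \<Rightarrow> nat list \<Rightarrow> bool" where
  "quot_iso b U c \<longleftrightarrow> (\<exists>p \<in> Mspace b c. mapply b p ` Nmod b = Nmod c
        \<and> {v \<in> Nmod b. mapply b p v = (\<lambda>_. 0)} = U)"

definition Vspace :: "nat list \<Rightarrow> nat list \<Rightarrow> nat list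
    \<Rightarrow> ((nat \<times> nat) \<times> (nat \<times> nat) \<Rightarrow> 'k::field) set" where
  "Vspace a c b = {f \<in> Mspace a b. inj_on (mapply a f) (Nmod a)
       \<and> quot_iso b (mapply a f ` Nmod a) c}"

definition Aut :: "nat list \<Rightarrow> ((nat \<times> nat) \<times> (nat \<times> nat) \<Rightarrow> 'k::field) set" where
  "Aut a = {m \<in> Mspace a a. bij_betw (mapply a m) (Nmod a) (Nmod a)}"

text \<open>Orbit G_f = {h f a^{-1} | a \<in> Aut N_alpha, h \<in> Aut N_beta}; as a ranges over the
  group Aut N_alpha so does a^{-1}.\<close>
definition orbit :: "nat list \<Rightarrow> nat list \<Rightarrow> ((nat \<times> nat) \<times> (nat \<times> nat) \<Rightarrow> 'k::field)
    \<Rightarrow> ((nat \<times> nat) \<times> (nat \<times> nat) \<Rightarrow> 'k) set" where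
  "orbit a b f = {mcomp b h (mcomp a f a') | a' h. a' \<in> Aut a \<and> h \<in> Aut b}"

text \<open>(N_a, N_b, f) \<le>_deg (N_a, N_b, g) relative to an ambient subset X of H_a^b:
  G_g lies in the closure of G_f in X with the induced Zariski topology.\<close>
definition deg_le_in :: "nat list \<Rightarrow> nat list \<Rightarrow> ((nat \<times> nat) \<times> (nat \<times> nat) \<Rightarrow> 'k::field) set
    \<Rightarrow> ((nat \<times> nat) \<times> (nat \<times> nat) \<Rightarrow> 'k) \<Rightarrow> ((nat \<times> nat) \<times> (nat \<times> nat) \<Rightarrow> 'k) \<Rightarrow> bool" where
  "deg_le_in a b X f g \<longleftrightarrow>
     orbit a b g \<subseteq> (subtopology (zariski (Hidx a b)) X) closure_of (orbit a b f)"

text \<open>An LR-tableau is encoded by the chain of partitions Gamma 0 \<subseteq> Gamma 1 \<subseteq> ...,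
  where the boxes of Gamma (l) minus Gamma (l-1) carry the entry l.
  Type (alpha, beta, gamma): Gamma 0 = gamma, eventually Gamma l = beta, each step a
  horizontal strip, the number of entries l is the number of parts of alpha that are \<ge> l,
  and the lattice permutation condition holds.\<close>
definition entries :: "(nat \<Rightarrow> nat list) \<Rightarrow> nat \<Rightarrow> nat \<Rightarrow> nat" where
  "entries G l r = part (G l) r - part (G (l - 1)) r"

definition is_LR_tableau :: "nat list \<Rightarrow> nat list \<Rightarrow> nat list \<Rightarrow> (nat \<Rightarrow> nat list) \<Rightarrow> bool" where
  "is_LR_tableau a b c G \<longleftrightarrow>
     (\<forall>l. is_partition (G l)) \<and> G 0 = c \<and> (\<exists>n. \<forall>l\<ge>n. G l = b)
   \<and> (\<forall>l r. part (G l) r \<le> part (G (Suc l)) r)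
   \<and> (\<forall>l r. part (G (Suc l)) (Suc r) \<le> part (G l) r)
   \<and> (\<forall>l. sum_list (G (Suc l)) - sum_list (G l) = card {i. i < length a \<and> Suc l \<le> a ! i})
   \<and> (\<forall>l r. 2 \<le> l \<longrightarrow> (\<Sum>s\<le>r. entries G l s) \<le> (\<Sum>s<r. entries G (l - 1) s))"

definition VGamma :: "nat list \<Rightarrow> nat list \<Rightarrow> nat list \<Rightarrow> (nat \<Rightarrow> nat list)
    \<Rightarrow> ((nat \<times> nat) \<times> (nat \<times> nat) \<Rightarrow> 'k::field) set" where
  "VGamma a c b G = {f \<in> Vspace a c b. \<forall>i. is_partition (G i)
       \<and> quot_iso b ((Tact b ^^ i) ` mapply a f ` Nmod a) (G i)}"

end

theory Submission
  imports Defs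
begin

lemma finite_bas: "finite (bas l)"
proof -
  have "bas l = Sigma {..<length l} (\<lambda>i. {..<l!i})" by (auto simp: bas_def)
  then show ?thesis by simp
qed

lemma mapply_mcomp:
  "mapply a (mcomp b m1 m2) v = mapply b m1 (mapply a m2 v)"
  unfolding mapply_def mcomp_def
  by (rule ext) (simp add: sum_distrib_left sum_distrib_right mult.assoc sum.swap[of _ "bas a"])

lemma mapply_Nmod: "m \<in> Hspace a b \<Longrightarrow> mapply a m v \<in> Nmod b"
  unfolding Hspace_def aff_def Hidx_def Nmod_def mapply_def
  by (auto intro!: sum.neutral)

lemma Tact_Nmod: "Tact l v \<in> Nmod l"
  unfolding Nmod_def Tact_def by auto

lemma mcomp_Hspace: "m1 \<in> Hspace b c \<Longrightarrow> m2 \<in> Hspace a b \<Longrightarrow> mcomp b m1 m2 \<in> Hspace a c"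
  unfolding Hspace_def aff_def Hidx_def mcomp_def
  by (auto intro!: sum.neutral)

lemma mcomp_Mspace: "m1 \<in> Mspace b c \<Longrightarrow> m2 \<in> Mspace a b \<Longrightarrow> mcomp b m1 m2 \<in> Mspace a c"
  unfolding Mspace_def
  by (auto simp: mcomp_Hspace mapply_mcomp mapply_Nmod)

lemma mapply_lin:
  "mapply a m (\<lambda>x. \<Sum>z\<in>A. c z * u z x) = (\<lambda>y. \<Sum>z\<in>A. c z * mapply a m (u z) y)"
  unfolding mapply_def
  by (rule ext) (simp add: sum_distrib_left mult.left_commute sum.swap[of _ A])

lemma Aut_inverse:
  fixes h :: "(nat \<times> nat) \<times> (nat \<times> nat) \<Rightarrow> 'k::field"
  assumes h: "h \<in> Aut b"
  shows "\<exists>hi \<in> Mspace b b. (\<forall>w\<in>Nmod b. mapply b h (mapply b hi w) = w)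
           \<and> (\<forall>u\<in>Nmod b. mapply b hi (mapply b h u) = u)"
proof -
  let ?\<phi> = "mapply b h"
  let ?\<psi> = "inv_into (Nmod b) ?\<phi>"
  have bij: "bij_betw ?\<phi> (Nmod b) (Nmod b)" and hM: "h \<in> Mspace b b"
    using h by (auto simp: Aut_def)
  have inj: "inj_on ?\<phi> (Nmod b)" and img: "?\<phi> ` Nmod b = Nmod b"
    using bij by (auto simp: bij_betw_def)
  define e :: "nat \<times> nat \<Rightarrow> nat \<times> nat \<Rightarrow> 'k" where "e z = (\<lambda>x. if x = z then 1 else 0)" for z
  have eN: "z \<in> bas b \<Longrightarrow> e z \<in> Nmod b" for z by (auto simp: e_def Nmod_def)
  have psiN: "w \<in> Nmod b \<Longrightarrow> ?\<psi> w \<in> Nmod b" for w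
    using img by (metis inv_into_into)
  have phipsi: "w \<in> Nmod b \<Longrightarrow> ?\<phi> (?\<psi> w) = w" for w
    using img by (metis f_inv_into_f)
  define hi where "hi = (\<lambda>(y, z). if z \<in> bas b then ?\<psi> (e z) y else (0::'k))"
  have hiH: "hi \<in> Hspace b b"
    unfolding Hspace_def aff_def Hidx_def
  proof (intro CollectI allI impI)
    fix c :: "(nat \<times> nat) \<times> (nat \<times> nat)" assume "c \<notin> bas b \<times> bas b"
    then show "hi c = 0"
      using psiN[OF eN] by (cases c) (auto simp: hi_def Nmod_def)
  qed
  have hi_eq: "mapply b hi w = ?\<psi> w" if w: "w \<in> Nmod b" for w
  proof -
    define s where "s = (\<lambda>y. \<Sum>z\<in>bas b. w z * ?\<psi> (e z) y)"
    have s1: "mapply b hi w = s"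
      unfolding mapply_def s_def hi_def by (rule ext) (auto simp: mult.commute intro!: sum.cong)
    have sN: "s \<in> Nmod b"
      using psiN[OF eN] unfolding s_def Nmod_def by (auto intro!: sum.neutral)
    have "?\<phi> s = (\<lambda>y. \<Sum>z\<in>bas b. w z * e z y)"
      unfolding s_def mapply_lin using phipsi[OF eN] by (auto intro!: sum.cong)
    also have "\<dots> = w"
    proof
      fix y
      have "(\<Sum>z\<in>bas b. w z * e z y) = (\<Sum>z\<in>bas b. if y = z then w z else 0)"
        by (rule sum.cong) (auto simp: e_def)
      also have "\<dots> = w y" using w finite_bas[of b] unfolding Nmod_def by (cases y) auto
      finally show "(\<Sum>z\<in>bas b. w z * e z y) = w y" .
    qed
    finally have "?\<phi> s = w" .
    then have "?\<psi> w = s" using sN inj by (metis inv_into_f_f)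
    with s1 show ?thesis by simp
  qed
  have hiM: "hi \<in> Mspace b b"
    unfolding Mspace_def
  proof (intro CollectI conjI ballI hiH)
    fix v :: "nat \<times> nat \<Rightarrow> 'k" assume v: "v \<in> Nmod b"
    have "?\<phi> (Tact b (mapply b hi v)) = Tact b (?\<phi> (mapply b hi v))"
      using hM hi_eq[OF v] psiN[OF v] by (auto simp: Mspace_def)
    also have "\<dots> = Tact b v" using hi_eq[OF v] phipsi[OF v] by simp
    also have "\<dots> = ?\<phi> (mapply b hi (Tact b v))"
      using hi_eq phipsi Tact_Nmod by metis
    finally show "mapply b hi (Tact b v) = Tact b (mapply b hi v)"
      using inj hi_eq psiN Tact_Nmod v by (metis inj_on_def)
  qed
  show ?thesis
  proof (intro bexI[OF _ hiM] conjI ballI)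
    fix w :: "nat \<times> nat \<Rightarrow> 'k" assume "w \<in> Nmod b" then show "?\<phi> (mapply b hi w) = w" using hi_eq phipsi by simp
  next
    fix u :: "nat \<times> nat \<Rightarrow> 'k" assume u: "u \<in> Nmod b"
    have "?\<phi> u \<in> Nmod b" using hM by (simp add: Mspace_def mapply_Nmod)
    then show "mapply b hi (?\<phi> u) = u" using hi_eq inv_into_f_f[OF inj u] by simp
  qed
qed

lemma quot_iso_Aut:
  fixes h :: "(nat \<times> nat) \<times> (nat \<times> nat) \<Rightarrow> 'k::field"
  assumes h: "h \<in> Aut b" and q: "quot_iso b W c"
  shows "quot_iso b (mapply b h ` W) c"
proof -
  obtain hi where hi: "hi \<in> Mspace b b" and hh: "\<forall>w\<in>Nmod b. mapply b h (mapply b hi w) = w"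
    and hh2: "\<forall>u\<in>Nmod b. mapply b hi (mapply b h u) = u"
    using Aut_inverse[OF h] by blast
  have hM: "h \<in> Mspace b b" using h by (simp add: Aut_def)
  obtain p where p: "p \<in> Mspace b c" and ps: "mapply b p ` Nmod b = Nmod c"
    and pk: "{v \<in> Nmod b. mapply b p v = (\<lambda>_. 0)} = W"
    using q by (auto simp: quot_iso_def)
  have hiN: "mapply b hi v \<in> Nmod b" for v :: "nat \<times> nat \<Rightarrow> 'k" using hi by (simp add: Mspace_def mapply_Nmod)
  have hN: "mapply b h v \<in> Nmod b" for v :: "nat \<times> nat \<Rightarrow> 'k" using hM by (simp add: Mspace_def mapply_Nmod)
  show ?thesis
    unfolding quot_iso_def
  proof (intro bexI[of _ "mcomp b p hi"] conjI)
    show "mcomp b p hi \<in> Mspace b c" using p hi by (rule mcomp_Mspace)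
    show "mapply b (mcomp b p hi) ` Nmod b = Nmod c"
    proof -
      have "mapply b hi ` Nmod b = Nmod b"
      proof
        show "mapply b hi ` Nmod b \<subseteq> Nmod b" using hiN by auto
        show "Nmod b \<subseteq> mapply b hi ` Nmod b"
          using hh2 hN by (metis image_eqI subsetI)
      qed
      then show ?thesis using ps by (simp add: mapply_mcomp image_comp[symmetric, unfolded comp_def])
    qed
    show "{v \<in> Nmod b. mapply b (mcomp b p hi) v = (\<lambda>_. 0)} = mapply b h ` W"
    proof
      show "{v \<in> Nmod b. mapply b (mcomp b p hi) v = (\<lambda>_. 0)} \<subseteq> mapply b h ` W"
      proof
        fix v assume "v \<in> {v \<in> Nmod b. mapply b (mcomp b p hi) v = (\<lambda>_. 0)}"
        then have v: "v \<in> Nmod b" "mapply b p (mapply b hi v) = (\<lambda>_. 0)"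
          by (auto simp: mapply_mcomp)
        then have "mapply b hi v \<in> W" using pk hiN by blast
        moreover have "v = mapply b h (mapply b hi v)" using hh v by simp
        ultimately show "v \<in> mapply b h ` W" by blast
      qed
      show "mapply b h ` W \<subseteq> {v \<in> Nmod b. mapply b (mcomp b p hi) v = (\<lambda>_. 0)}"
      proof
        fix v assume "v \<in> mapply b h ` W"
        then obtain u where u: "u \<in> Nmod b" "mapply b p u = (\<lambda>_. 0)" and vu: "v = mapply b h u"
          using pk by blast
        show "v \<in> {v \<in> Nmod b. mapply b (mcomp b p hi) v = (\<lambda>_. 0)}"
          using u vu hN hh2 by (simp add: mapply_mcomp)
      qed
    qed
  qed
qed

lemma deg_le_in_iff:
  assumes "orbit a b f \<subseteq> X" "orbit a b g \<subseteq> X"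
  shows "deg_le_in a b X f g \<longleftrightarrow> orbit a b g \<subseteq> zariski (Hidx a b) closure_of orbit a b f"
proof -
  have "X \<inter> orbit a b f = orbit a b f" using assms by blast
  then show ?thesis using assms unfolding deg_le_in_def closure_of_subtopology by auto
qed

lemma Tact_pow_Nmod: "w \<in> Nmod l \<Longrightarrow> (Tact l ^^ i) w \<in> Nmod l"
  by (cases i) (auto simp: Tact_Nmod)

lemma Tact_pow_comm:
  assumes hM: "h \<in> Mspace b b" and w: "w \<in> Nmod b"
  shows "(Tact b ^^ i) (mapply b h w) = mapply b h ((Tact b ^^ i) w)"
proof (induction i)
  case 0 then show ?case by simp
next
  case (Suc i)
  then show ?case using hM Tact_pow_Nmod[OF w, of i] by (simp add: Mspace_def)
qed

lemma orbit_props: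
  fixes f :: "(nat \<times> nat) \<times> (nat \<times> nat) \<Rightarrow> 'k::field"
  assumes a': "a' \<in> Aut a" and h: "h \<in> Aut b" and f: "f \<in> Mspace a b"
  shows "mcomp b h (mcomp a f a') \<in> Mspace a b"
    and "mapply a (mcomp b h (mcomp a f a')) ` Nmod a = mapply b h ` (mapply a f ` Nmod a)"
    and "inj_on (mapply a f) (Nmod a) \<Longrightarrow> inj_on (mapply a (mcomp b h (mcomp a f a'))) (Nmod a)"
proof -
  have a'M: "a' \<in> Mspace a a" and a'b: "bij_betw (mapply a a') (Nmod a) (Nmod a)"
    and hM: "h \<in> Mspace b b" and hb: "bij_betw (mapply b h) (Nmod b) (Nmod b)"
    using a' h by (auto simp: Aut_def)
  show "mcomp b h (mcomp a f a') \<in> Mspace a b"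
    using hM f a'M by (intro mcomp_Mspace)
  have img: "mapply a a' ` Nmod a = Nmod a" using a'b by (simp add: bij_betw_def)
  show "mapply a (mcomp b h (mcomp a f a')) ` Nmod a = mapply b h ` (mapply a f ` Nmod a)"
  proof -
    have "mapply a (mcomp b h (mcomp a f a')) ` Nmod a
        = mapply b h ` mapply a f ` (mapply a a' ` Nmod a)"
      by (simp add: mapply_mcomp image_image)
    then show ?thesis by (simp add: img)
  qed
  assume inj: "inj_on (mapply a f) (Nmod a)"
  have fN: "mapply a f v \<in> Nmod b" for v :: "nat \<times> nat \<Rightarrow> 'k"
    using f by (simp add: Mspace_def mapply_Nmod)
  have a'N: "mapply a a' v \<in> Nmod a" for v :: "nat \<times> nat \<Rightarrow> 'k"
    using a'M by (simp add: Mspace_def mapply_Nmod)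
  have hinj: "inj_on (mapply b h) (Nmod b)" and a'inj: "inj_on (mapply a a') (Nmod a)"
    using hb a'b by (auto simp: bij_betw_def)
  show "inj_on (mapply a (mcomp b h (mcomp a f a'))) (Nmod a)"
  proof (rule inj_onI)
    fix x y assume xy: "x \<in> Nmod a" "y \<in> Nmod a"
      "mapply a (mcomp b h (mcomp a f a')) x = mapply a (mcomp b h (mcomp a f a')) y"
    then have "mapply b h (mapply a f (mapply a a' x)) = mapply b h (mapply a f (mapply a a' y))"
      by (simp add: mapply_mcomp)
    then have "mapply a f (mapply a a' x) = mapply a f (mapply a a' y)"
      using hinj fN by (simp add: inj_on_eq_iff)
    then have "mapply a a' x = mapply a a' y"
      using inj a'N by (simp add: inj_on_eq_iff)
    then show "x = y" using a'inj xy(1,2) by (simp add: inj_on_eq_iff)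
  qed
qed

lemma orbit_V:
  fixes f :: "(nat \<times> nat) \<times> (nat \<times> nat) \<Rightarrow> 'k::field"
  assumes "f \<in> Vspace a c b"
  shows "orbit a b f \<subseteq> Vspace a c b"
proof
  fix F assume "F \<in> orbit a b f"
  then obtain a' h where a': "a' \<in> Aut a" and h: "h \<in> Aut b" and F: "F = mcomp b h (mcomp a f a')"
    unfolding orbit_def by blast
  have f: "f \<in> Mspace a b" "inj_on (mapply a f) (Nmod a)" "quot_iso b (mapply a f ` Nmod a) c"
    using assms by (auto simp: Vspace_def)
  show "F \<in> Vspace a c b"
    unfolding Vspace_def F using orbit_props[OF a' h f(1)] f(2) quot_iso_Aut[OF h f(3)]
    by auto
qed

lemma orbit_VG:
  fixes f :: "(nat \<times> nat) \<times> (nat \<times> nat) \<Rightarrow> 'k::field"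
  assumes "f \<in> VGamma a c b G"
  shows "orbit a b f \<subseteq> VGamma a c b G"
proof
  fix F assume FO: "F \<in> orbit a b f"
  then obtain a' h where a': "a' \<in> Aut a" and h: "h \<in> Aut b" and F: "F = mcomp b h (mcomp a f a')"
    unfolding orbit_def by blast
  have fV: "f \<in> Vspace a c b" and fG: "\<forall>i. is_partition (G i)
       \<and> quot_iso b ((Tact b ^^ i) ` mapply a f ` Nmod a) (G i)"
    using assms by (auto simp: VGamma_def)
  have FV: "F \<in> Vspace a c b" using orbit_V[OF fV] FO by blast
  have fM: "f \<in> Mspace a b" using fV by (simp add: Vspace_def)
  have hM: "h \<in> Mspace b b" using h by (simp add: Aut_def)
  have fN: "mapply a f v \<in> Nmod b" for v :: "nat \<times> nat \<Rightarrow> 'k"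
    using fM by (simp add: Mspace_def mapply_Nmod)
  have eq: "(Tact b ^^ i) ` mapply a F ` Nmod a = mapply b h ` ((Tact b ^^ i) ` mapply a f ` Nmod a)" for i
    unfolding F orbit_props(2)[OF a' h fM] image_image
    using Tact_pow_comm[OF hM fN] by simp
  show "F \<in> VGamma a c b G"
    unfolding VGamma_def using FV fG eq quot_iso_Aut[OF h] by auto
qed

theorem lemma3p2:
  fixes \<alpha> \<beta> \<gamma> :: "nat list" and \<Gamma> :: "nat \<Rightarrow> nat list"
  assumes "is_partition \<alpha>" and "is_partition \<beta>" and "is_partition \<gamma>"
  shows "(\<forall>f g :: (nat \<times> nat) \<times> (nat \<times> nat) \<Rightarrow> 'k::alg_closed_field.
            f \<in> Vspace \<alpha> \<gamma> \<beta> \<and> g \<in> Vspace \<alpha> \<gamma> \<beta> \<longrightarrow>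
            (deg_le_in \<alpha> \<beta> (Vspace \<alpha> \<gamma> \<beta>) f g \<longleftrightarrow> deg_le_in \<alpha> \<beta> (Mspace \<alpha> \<beta>) f g))
       \<and> (is_LR_tableau \<alpha> \<beta> \<gamma> \<Gamma> \<longrightarrow>
         (\<forall>f g :: (nat \<times> nat) \<times> (nat \<times> nat) \<Rightarrow> 'k::alg_closed_field.
            f \<in> VGamma \<alpha> \<gamma> \<beta> \<Gamma> \<and> g \<in> VGamma \<alpha> \<gamma> \<beta> \<Gamma> \<longrightarrow>
            (deg_le_in \<alpha> \<beta> (VGamma \<alpha> \<gamma> \<beta> \<Gamma>) f g \<longleftrightarrow> deg_le_in \<alpha> \<beta> (Mspace \<alpha> \<beta>) f g)))"
proof -
  have VM: "Vspace \<alpha> \<gamma> \<beta> \<subseteq> (Mspace \<alpha> \<beta> :: ((nat \<times> nat) \<times> (nat \<times> nat) \<Rightarrow> 'k) set)"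
    by (auto simp: Vspace_def)
  have GV: "VGamma \<alpha> \<gamma> \<beta> \<Gamma> \<subseteq> (Vspace \<alpha> \<gamma> \<beta> :: ((nat \<times> nat) \<times> (nat \<times> nat) \<Rightarrow> 'k) set)"
    by (auto simp: VGamma_def)
  show ?thesis
  proof (intro conjI allI impI)
    fix f g :: "(nat \<times> nat) \<times> (nat \<times> nat) \<Rightarrow> 'k"
    assume fg: "f \<in> Vspace \<alpha> \<gamma> \<beta> \<and> g \<in> Vspace \<alpha> \<gamma> \<beta>"
    then have "orbit \<alpha> \<beta> f \<subseteq> Vspace \<alpha> \<gamma> \<beta>" "orbit \<alpha> \<beta> g \<subseteq> Vspace \<alpha> \<gamma> \<beta>"
      using orbit_V by blast+
    then show "deg_le_in \<alpha> \<beta> (Vspace \<alpha> \<gamma> \<beta>) f g \<longleftrightarrow> deg_le_in \<alpha> \<beta> (Mspace \<alpha> \<beta>) f g"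
      using deg_le_in_iff[of \<alpha> \<beta> f _ g] VM by (meson subset_trans)
  next
    fix f g :: "(nat \<times> nat) \<times> (nat \<times> nat) \<Rightarrow> 'k"
    assume fg: "f \<in> VGamma \<alpha> \<gamma> \<beta> \<Gamma> \<and> g \<in> VGamma \<alpha> \<gamma> \<beta> \<Gamma>"
    then have "orbit \<alpha> \<beta> f \<subseteq> VGamma \<alpha> \<gamma> \<beta> \<Gamma>" "orbit \<alpha> \<beta> g \<subseteq> VGamma \<alpha> \<gamma> \<beta> \<Gamma>"
      using orbit_VG by blast+
    then show "deg_le_in \<alpha> \<beta> (VGamma \<alpha> \<gamma> \<beta> \<Gamma>) f g \<longleftrightarrow> deg_le_in \<alpha> \<beta> (Mspace \<alpha> \<beta>) f g"
      using deg_le_in_iff[of \<alpha> \<beta> f _ g] VM GV by (meson subset_trans)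
  qed
qed

end
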